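(* Let $R$ be any ring and let $x,y\in R$ satisfy $x^2=0$, $y^2=0$, $x\neq 0$, $y\neq 0$. If $x+y$ is nilpotent, then $xy$ is nilpotent.
   Context: Rings are associative and not necessarily unital. *)

theory Defs
  imports Main
begin

text \<open>Positive powers in a (possibly non-unital) semigroup: ppow x n = x^(n+1).\<close>
fun ppow :: "'a::semigroup_mult \<Rightarrow> nat \<Rightarrow> 'a" where
  "ppow x 0 = x"
| "ppow x (Suc n) = ppow x n * x"

definition nilpotent :: "'a::{semigroup_mult,zero} \<Rightarrow> bool" where
  "nilpotent x \<longleftrightarrow> (\<exists>n. ppow x n = 0)"

end

theory Submission
  imports Defs
begin

lemma ppow_left: "ppow (a::'a::semigroup_mult) (Suc k) = a * ppow a k"
  by (induction k) (auto simp: mult.assoc)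

lemma ppow_zero_mono: "ppow (z::'a::ring) n = 0 \<Longrightarrow> ppow z (n + m) = 0"
  by (induction m) auto

lemma ppow_sq: "ppow (z::'a::semigroup_mult) (2*k+1) = ppow (z*z) k"
  by (induction k) (auto simp: mult.assoc)

lemma ppow_right_zero: "a * b = 0 \<Longrightarrow> ppow (a::'a::ring) k * b = 0"
  by (cases k) (auto simp: mult.assoc)

lemma ppow_add: assumes "a * b = 0" "b * a = 0"
  shows "ppow (a+b::'a::ring) k = ppow a k + ppow b k"
proof (induction k)
  case 0 then show ?case by simp
next
  case (Suc k)
  have "ppow (a+b) (Suc k) = (ppow a k + ppow b k) * (a + b)" using Suc by simp
  also have "\<dots> = ppow a k * a + ppow a k * b + ppow b k * a + ppow b k * b"
    by (simp add: algebra_simps)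
  also have "\<dots> = ppow a (Suc k) + ppow b (Suc k)"
    using ppow_right_zero[OF assms(1)] ppow_right_zero[OF assms(2)] by simp
  finally show ?case .
qed

lemma ppow_swap: "x * ppow (y*x) k = ppow (x*y::'a::semigroup_mult) k * x"
proof (induction k)
  case 0 then show ?case by (simp add: mult.assoc)
next
  case (Suc k)
  have "x * ppow (y*x) (Suc k) = (x * ppow (y*x) k) * (y*x)" by (simp add: mult.assoc)
  also have "\<dots> = ppow (x*y) k * (x*y) * x" using Suc by (simp add: mult.assoc)
  finally show ?case by simp
qed

lemma ppow_xx: assumes "x * x = 0" shows "x * ppow (x*y::'a::ring) k = 0"
proof -
  have "x * ppow (x*y) k = x * ppow (x*y) k" ..
  have "ppow (x*y) (Suc k) = (x*y) * ppow (x*y) k" by (rule ppow_left)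
  then have "x * ppow (x*y) (Suc k) = 0" using assms by (simp add: mult.assoc[symmetric])
  show ?thesis
  proof (cases k)
    case 0 then show ?thesis using assms by (simp add: mult.assoc[symmetric])
  next
    case (Suc j)
    have "x * ppow (x*y) (Suc j) = (x*x) * (y * ppow (x*y) j)"
      by (simp only: ppow_left mult.assoc)
    then show ?thesis using Suc assms by simp
  qed
qed

theorem lemma2p1:
  fixes x y :: "'a::ring"
  assumes "x * x = 0" and "y * y = 0" and "x \<noteq> 0" and "y \<noteq> 0"
    and "nilpotent (x + y)"
  shows "nilpotent (x * y)"
proof -
  obtain n where n: "ppow (x+y) n = 0" using assms(5) unfolding nilpotent_def by blast
  have "ppow (x+y) (2*n+1) = 0" using ppow_zero_mono[OF n, of "n+1"] by (simp add: mult_2)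
  then have "ppow ((x+y)*(x+y)) n = 0" by (simp only: ppow_sq)
  moreover have "(x+y)*(x+y) = x*y + y*x" using assms(1,2) by (simp add: algebra_simps)
  moreover have "(x*y)*(y*x) = 0" using assms(2) by (simp add: mult.assoc[symmetric] mult.assoc)
  moreover have "(y*x)*(x*y) = 0" using assms(1) by (simp add: mult.assoc[symmetric] mult.assoc)
  ultimately have S: "ppow (x*y) n + ppow (y*x) n = 0" using ppow_add by metis
  have "x * (ppow (x*y) n + ppow (y*x) n) * y = ppow (x*y) n * x * y"
    using ppow_xx[OF assms(1), of y n] ppow_swap[of x y n] by (simp add: algebra_simps)
  also have "\<dots> = ppow (x*y) (Suc n)" by (simp add: mult.assoc)
  finally have "ppow (x*y) (Suc n) = 0" using S by simp
  then show ?thesis unfolding nilpotent_def by blast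
qed

end
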